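(* Let $G$ be a group with finite symmetric generating set $Z$, let $X,Y$ be finite sets equipped with maps to $G$, let $K\ge0$, and fix a total order on $Y^{\$}$ with induced lexicographic order $\le_{lex}$ on words of equal length over $Y^{\$}$. Suppose $\mathcal{S}\subseteq(Y^{\$})^*$ is a regular language. Then the language $$\mathcal{M}_2=\{(U,V)\in B^*\mid V \text{ is the }\le_{lex}\text{-minimum of }\{V'\in\mathcal{S}\mid (U,V')\in B^* \text{ is a } K\text{-synchronous BCD pair in }(G,d_Z)\}\}$$ is regular.
   Context: Elements of $X$ and $Y$ are regarded as elements of $G$. Let $\$_X\notin X$, $\$_Y\notin Y$ be padding symbols interpreted as the identity of $G$, $X^{\$}=X\cup\{\$_X\}$, $Y^{\$}=Y\cup\{\$_Y\}$, $B=X^{\$}\times Y^{\$}$. A word over $B$ is written $(U,V)$ with $U\in(X^{\$})^*$, $V\in(Y^{\$})^*$ of the same length. For a word $W$, $W_j$ is its prefix of length $j$ ($W_j=W$ if $j>\ell(W)$). $(U,V)\in B^*$ is a $K$-synchronous BCD pair in $(G,d_Z)$ if there exists $g\in G$ with $|g|_Z\le K$ such that $gU=_GVg$ and $|V_j^{-1}gU_j|_Z\le K$ for all $j\ge0$. *)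

theory Defs
  imports Complex_Main
begin

text \<open>The group G is the ambient type 'g (class group_add, written additively,
  not assumed commutative). Padding symbol = None.\<close>

definition word_length :: "'g::group_add set \<Rightarrow> 'g \<Rightarrow> nat" where
  "word_length Z g = (LEAST n. \<exists>ws. ws \<in> lists Z \<and> length ws = n \<and> sum_list ws = g)"

definition finite_symmetric_generating :: "'g::group_add set \<Rightarrow> bool" where
  "finite_symmetric_generating Z \<longleftrightarrow> finite Z \<and> (\<forall>z\<in>Z. - z \<in> Z)
     \<and> (\<forall>g. \<exists>ws. ws \<in> lists Z \<and> sum_list ws = g)"

definition padded :: "'a set \<Rightarrow> 'a option set" where
  "padded A = Some ` A \<union> {None}"

definition eval_word :: "('a \<Rightarrow> 'g::group_add) \<Rightarrow> 'a option list \<Rightarrow> 'g" where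
  "eval_word \<iota> U = sum_list (map (\<lambda>a. case a of None \<Rightarrow> 0 | Some x \<Rightarrow> \<iota> x) U)"

definition sync_BCD_pair ::
  "'g::group_add set \<Rightarrow> ('x \<Rightarrow> 'g) \<Rightarrow> ('y \<Rightarrow> 'g) \<Rightarrow> real \<Rightarrow> 'x option list \<Rightarrow> 'y option list \<Rightarrow> bool" where
  "sync_BCD_pair Z \<iota>X \<iota>Y K U V \<longleftrightarrow> length U = length V \<and>
     (\<exists>g. real (word_length Z g) \<le> K \<and> g + eval_word \<iota>X U = eval_word \<iota>Y V + g \<and>
        (\<forall>j. real (word_length Z (- eval_word \<iota>Y (take j V) + g + eval_word \<iota>X (take j U))) \<le> K))"

definition lex_le :: "('a \<times> 'a) set \<Rightarrow> 'a list \<Rightarrow> 'a list \<Rightarrow> bool" where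
  "lex_le r V V' \<longleftrightarrow> V = V' \<or> (V, V') \<in> lexord (r - Id)"

definition regular :: "'a set \<Rightarrow> 'a list set \<Rightarrow> bool" where
  "regular \<Sigma> L \<longleftrightarrow> (\<exists>(Q::nat set) q0 \<delta> F. finite Q \<and> q0 \<in> Q \<and>
     (\<forall>q\<in>Q. \<forall>a\<in>\<Sigma>. \<delta> q a \<in> Q) \<and> F \<subseteq> Q \<and>
     L = {w. w \<in> lists \<Sigma> \<and> foldl \<delta> q0 w \<in> F})"

end

theory Submission
  imports Defs
begin

definition quot :: "'a list \<Rightarrow> 'a list set \<Rightarrow> 'a list set" where
  "quot u L = {v. u @ v \<in> L}"

definition reg :: "'a set \<Rightarrow> 'a list set \<Rightarrow> bool" where
  "reg \<Sigma> L \<longleftrightarrow> L \<subseteq> lists \<Sigma> \<and> finite {quot u L | u. u \<in> lists \<Sigma>}"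

lemma quot_Nil[simp]: "quot [] L = L" by (simp add: quot_def)
lemma quot_append: "quot v (quot u L) = quot (u @ v) L" by (simp add: quot_def)

lemma foldl_in: "q \<in> Q \<Longrightarrow> (\<forall>q\<in>Q. \<forall>a\<in>\<Sigma>. \<delta> q a \<in> Q) \<Longrightarrow> u \<in> lists \<Sigma> \<Longrightarrow> foldl \<delta> q u \<in> Q"
  by (induction u arbitrary: q) auto

lemma regular_imp_reg: assumes "regular \<Sigma> L" shows "reg \<Sigma> L"
proof -
  obtain Q q0 \<delta> F where Q: "finite (Q::nat set)" "q0 \<in> Q" "\<forall>q\<in>Q. \<forall>a\<in>\<Sigma>. \<delta> q a \<in> Q" "F \<subseteq> Q"
    and L: "L = {w. w \<in> lists \<Sigma> \<and> foldl \<delta> q0 w \<in> F}"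
    using assms unfolding regular_def by blast
  have sub: "{quot u L | u. u \<in> lists \<Sigma>} \<subseteq> (\<lambda>q. {v. v \<in> lists \<Sigma> \<and> foldl \<delta> q v \<in> F}) ` Q"
  proof
    fix X assume "X \<in> {quot u L | u. u \<in> lists \<Sigma>}"
    then obtain u where u: "u \<in> lists \<Sigma>" "X = quot u L" by blast
    have "X = {v. v \<in> lists \<Sigma> \<and> foldl \<delta> (foldl \<delta> q0 u) v \<in> F}"
      using u by (auto simp: quot_def L)
    moreover have "foldl \<delta> q0 u \<in> Q" using foldl_in Q u by metis
    ultimately show "X \<in> (\<lambda>q. {v. v \<in> lists \<Sigma> \<and> foldl \<delta> q v \<in> F}) ` Q" by blast
  qed
  have "finite {quot u L | u. u \<in> lists \<Sigma>}"
    using sub Q(1) by (meson finite_imageI finite_subset)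
  moreover have "L \<subseteq> lists \<Sigma>" using L by blast
  ultimately show ?thesis unfolding reg_def by blast
qed

lemma reg_imp_regular: assumes "reg \<Sigma> L" shows "regular \<Sigma> L"
proof -
  define R where "R = {quot u L | u. u \<in> lists \<Sigma>}"
  have R: "finite R" and Lsub: "L \<subseteq> lists \<Sigma>" using assms by (auto simp: reg_def R_def)
  obtain f :: "'a list set \<Rightarrow> nat" and n where f: "f ` R = {i. i < n}" "inj_on f R"
    using finite_imp_inj_to_nat_seg[OF R] by blast
  define g where "g = the_inv_into R f"
  define \<delta> where "\<delta> = (\<lambda>q a. f (quot [a] (g q)))"
  have gf: "X \<in> R \<Longrightarrow> g (f X) = X" for X using f(2) by (simp add: g_def the_inv_into_f_f)
  have inR: "u \<in> lists \<Sigma> \<Longrightarrow> quot u L \<in> R" for u unfolding R_def by blast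
  have LR: "L \<in> R" using inR[of "[]"] by simp
  have run: "u \<in> lists \<Sigma> \<Longrightarrow> foldl \<delta> (f L) u = f (quot u L)" for u
  proof (induction u rule: rev_induct)
    case Nil then show ?case by simp
  next
    case (snoc a u)
    have "quot u L \<in> R" using snoc.prems inR by auto
    then show ?case using snoc by (simp add: \<delta>_def gf quot_append)
  qed
  have c1: "finite (f ` R)" using R by simp
  have c2: "f L \<in> f ` R" using LR by simp
  have c3: "\<forall>q\<in>f ` R. \<forall>a\<in>\<Sigma>. \<delta> q a \<in> f ` R"
  proof (intro ballI)
    fix q a assume "q \<in> f ` R" "a \<in> \<Sigma>"
    then obtain u where u: "u \<in> lists \<Sigma>" "q = f (quot u L)" "a \<in> \<Sigma>" unfolding R_def by auto
    have "\<delta> q a = f (quot (u @ [a]) L)" using u gf inR by (simp add: \<delta>_def quot_append)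
    then show "\<delta> q a \<in> f ` R" using inR u by simp
  qed
  have c4: "f ` {X\<in>R. [] \<in> X} \<subseteq> f ` R" by blast
  have c5: "L = {w. w \<in> lists \<Sigma> \<and> foldl \<delta> (f L) w \<in> f ` {X\<in>R. [] \<in> X}}"
  proof (intro set_eqI iffI)
    fix w assume w: "w \<in> L"
    hence wl: "w \<in> lists \<Sigma>" using Lsub by blast
    have "[] \<in> quot w L" using w by (simp add: quot_def)
    then show "w \<in> {w. w \<in> lists \<Sigma> \<and> foldl \<delta> (f L) w \<in> f ` {X\<in>R. [] \<in> X}}"
      using wl run inR by auto
  next
    fix w assume w: "w \<in> {w. w \<in> lists \<Sigma> \<and> foldl \<delta> (f L) w \<in> f ` {X\<in>R. [] \<in> X}}"
    hence wl: "w \<in> lists \<Sigma>" by auto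
    have "f (quot w L) \<in> f ` {X\<in>R. [] \<in> X}" using w run[OF wl] by simp
    then obtain X where "X \<in> R" "[] \<in> X" "f (quot w L) = f X" by auto
    hence "quot w L = X" using f(2) inR[OF wl] by (meson inj_onD)
    then show "w \<in> L" using \<open>[] \<in> X\<close> by (auto simp: quot_def)
  qed
  show ?thesis unfolding regular_def
    using c1 c2 c3 c4 c5 by blast
qed

lemma regular_iff_reg: "regular \<Sigma> L \<longleftrightarrow> reg \<Sigma> L"
  using regular_imp_reg reg_imp_regular by blast

lemma reg_Int: assumes "reg \<Sigma> A" "reg \<Sigma> B" shows "reg \<Sigma> (A \<inter> B)"
proof -
  have "{quot u (A \<inter> B) | u. u \<in> lists \<Sigma>} \<subseteq>
     (\<lambda>(X,Y). X \<inter> Y) ` ({quot u A | u. u \<in> lists \<Sigma>} \<times> {quot u B | u. u \<in> lists \<Sigma>})"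
    by (auto simp: quot_def image_def)
  then show ?thesis using assms unfolding reg_def
    by (meson finite_SigmaI finite_imageI finite_subset le_infI1)
qed

lemma reg_Diff: assumes "reg \<Sigma> A" "reg \<Sigma> B" shows "reg \<Sigma> (A - B)"
proof -
  have "{quot u (A - B) | u. u \<in> lists \<Sigma>} \<subseteq>
     (\<lambda>(X,Y). X - Y) ` ({quot u A | u. u \<in> lists \<Sigma>} \<times> {quot u B | u. u \<in> lists \<Sigma>})"
    by (auto simp: quot_def image_def)
  then show ?thesis using assms unfolding reg_def
    by (meson finite_SigmaI finite_imageI finite_subset Diff_subset order_trans)
qed

lemma reg_inv: assumes "h ` \<Gamma> \<subseteq> \<Sigma>" "reg \<Sigma> L"
  shows "reg \<Gamma> {w \<in> lists \<Gamma>. map h w \<in> L}"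
proof -
  have "{quot u {w \<in> lists \<Gamma>. map h w \<in> L} | u. u \<in> lists \<Gamma>} \<subseteq>
     (\<lambda>X. {v \<in> lists \<Gamma>. map h v \<in> X}) ` {quot u L | u. u \<in> lists \<Sigma>}"
  proof
    fix Y assume "Y \<in> {quot u {w \<in> lists \<Gamma>. map h w \<in> L} | u. u \<in> lists \<Gamma>}"
    then obtain u where u: "u \<in> lists \<Gamma>" "Y = quot u {w \<in> lists \<Gamma>. map h w \<in> L}" by blast
    have "Y = {v \<in> lists \<Gamma>. map h v \<in> quot (map h u) L}" using u by (auto simp: quot_def)
    moreover have "map h u \<in> lists \<Sigma>" using u assms(1) by (auto simp: image_subset_iff)
    ultimately show "Y \<in> (\<lambda>X. {v \<in> lists \<Gamma>. map h v \<in> X}) ` {quot u L | u. u \<in> lists \<Sigma>}" by blast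
  qed
  moreover have "finite {quot u L | u. u \<in> lists \<Sigma>}" using assms(2) by (simp add: reg_def)
  ultimately have "finite {quot u {w \<in> lists \<Gamma>. map h w \<in> L} | u. u \<in> lists \<Gamma>}"
    using finite_subset by blast
  then show ?thesis unfolding reg_def by blast
qed

lemma reg_img: assumes "h ` \<Sigma> \<subseteq> \<Gamma>" "reg \<Sigma> L"
  shows "reg \<Gamma> (map h ` L)"
proof -
  define R where "R = {quot u L | u. u \<in> lists \<Sigma>}"
  have q: "quot u (map h ` L) = \<Union> ((`) (map h) ` {quot w1 L | w1. w1 \<in> lists \<Sigma> \<and> map h w1 = u})" for u
  proof (intro set_eqI iffI)
    fix v assume "v \<in> quot u (map h ` L)"
    then obtain w where w: "w \<in> L" "map h w = u @ v" by (auto simp: quot_def)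
    then obtain w1 w2 where "w = w1 @ w2" "u = map h w1" "v = map h w2"
      by (auto simp: map_eq_append_conv)
    moreover have "w1 \<in> lists \<Sigma>" using w assms(2) \<open>w = w1 @ w2\<close> by (auto simp: reg_def)
    ultimately show "v \<in> \<Union> ((`) (map h) ` {quot w1 L | w1. w1 \<in> lists \<Sigma> \<and> map h w1 = u})"
      using w by (auto simp: quot_def)
  next
    fix v assume "v \<in> \<Union> ((`) (map h) ` {quot w1 L | w1. w1 \<in> lists \<Sigma> \<and> map h w1 = u})"
    then obtain w1 w2 where "w1 @ w2 \<in> L" "map h w1 = u" "v = map h w2" by (auto simp: quot_def)
    then show "v \<in> quot u (map h ` L)" unfolding quot_def
      by (metis (mono_tags, lifting) image_eqI map_append mem_Collect_eq)
  qed
  have "{quot u (map h ` L) | u. u \<in> lists \<Gamma>} \<subseteq> (\<lambda>S. \<Union> ((`) (map h) ` S)) ` Pow R"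
  proof
    fix Y assume "Y \<in> {quot u (map h ` L) | u. u \<in> lists \<Gamma>}"
    then obtain u where "Y = quot u (map h ` L)" by blast
    then show "Y \<in> (\<lambda>S. \<Union> ((`) (map h) ` S)) ` Pow R" unfolding q R_def by blast
  qed
  moreover have "finite R" using assms(2) by (simp add: reg_def R_def)
  moreover have "map h ` L \<subseteq> lists \<Gamma>" using assms by (force simp: reg_def image_subset_iff)
  ultimately show ?thesis unfolding reg_def by (meson finite_Pow_iff finite_imageI finite_subset)
qed


definition ov :: "('a \<Rightarrow> 'g::group_add) \<Rightarrow> 'a option \<Rightarrow> 'g" where
  "ov f a = (case a of None \<Rightarrow> 0 | Some x \<Rightarrow> f x)"

definition hs :: "('x \<Rightarrow> 'g::group_add) \<Rightarrow> ('y \<Rightarrow> 'g) \<Rightarrow> 'g \<Rightarrow> 'x option \<times> 'y option \<Rightarrow> 'g" where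
  "hs \<iota>X \<iota>Y h p = - ov \<iota>Y (snd p) + h + ov \<iota>X (fst p)"

lemma eval_word_ov: "eval_word f U = sum_list (map (ov f) U)"
  by (simp add: eval_word_def ov_def[abs_def])

lemma hfold: "- eval_word \<iota>Y (map snd w) + g + eval_word \<iota>X (map fst w) = foldl (hs \<iota>X \<iota>Y) g w"
proof (induction w rule: rev_induct)
  case Nil then show ?case by (simp add: eval_word_ov)
next
  case (snoc x w)
  have "- eval_word \<iota>Y (map snd (w@[x])) + g + eval_word \<iota>X (map fst (w@[x]))
     = - ov \<iota>Y (snd x) + (- eval_word \<iota>Y (map snd w) + g + eval_word \<iota>X (map fst w)) + ov \<iota>X (fst x)"
    by (simp add: eval_word_ov add.assoc minus_add diff_conv_add_uminus del: add_uminus_conv_diff)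
  also have "\<dots> = hs \<iota>X \<iota>Y (foldl (hs \<iota>X \<iota>Y) g w) x"
    unfolding snoc.IH by (rule hs_def[symmetric])
  also have "\<dots> = foldl (hs \<iota>X \<iota>Y) g (w @ [x])" by simp
  finally show ?case .
qed

lemma grp_eq: "(g::'g::group_add) + a = b + g \<longleftrightarrow> -b + g + a = g"
proof
  assume "g + a = b + g"
  then have "-b + (g + a) = -b + (b + g)" by simp
  then show "-b + g + a = g" by (simp add: add.assoc)
next
  assume H: "-b + g + a = g"
  have "b + g = b + (-b + g + a)" using H by simp
  also have "\<dots> = g + a" by (simp add: add.assoc[symmetric])
  finally show "g + a = b + g" by simp
qed

lemma sync_iff: "sync_BCD_pair Z \<iota>X \<iota>Y K (map fst w) (map snd w) \<longleftrightarrow>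
  (\<exists>g. real (word_length Z g) \<le> K \<and> foldl (hs \<iota>X \<iota>Y) g w = g \<and>
     (\<forall>j. real (word_length Z (foldl (hs \<iota>X \<iota>Y) g (take j w))) \<le> K))"
  by (simp add: sync_BCD_pair_def grp_eq hfold take_map)

lemma all_take_append: "(\<forall>j. P (take j (u @ v))) \<longleftrightarrow> (\<forall>j. P (take j u)) \<and> (\<forall>j. P (u @ take j v))"
proof
  assume H: "\<forall>j. P (take j (u @ v))"
  show "(\<forall>j. P (take j u)) \<and> (\<forall>j. P (u @ take j v))"
  proof
    show "\<forall>j. P (take j u)"
    proof
      fix j show "P (take j u)"
      proof (cases "j \<le> length u")
        case True then show ?thesis using H[rule_format, of j] by simp
      next
        case False then show ?thesis using H[rule_format, of "length u"] by simp
      qed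
    qed
    show "\<forall>j. P (u @ take j v)"
    proof
      fix j from H have "P (take (length u + j) (u @ v))" by blast
      then show "P (u @ take j v)" by simp
    qed
  qed
next
  assume H: "(\<forall>j. P (take j u)) \<and> (\<forall>j. P (u @ take j v))"
  show "\<forall>j. P (take j (u @ v))"
  proof
    fix j show "P (take j (u @ v))"
    proof (cases "j \<le> length u")
      case True then show ?thesis using H by simp
    next
      case False then show ?thesis using H by simp
    qed
  qed
qed

lemma ball_finite: assumes "finite Z" "\<forall>g. \<exists>ws. ws \<in> lists Z \<and> sum_list ws = g"
  shows "finite {g. real (word_length Z g) \<le> K}"
proof -
  have "{g. real (word_length Z g) \<le> K} \<subseteq> sum_list ` {ws. set ws \<subseteq> Z \<and> length ws \<le> nat \<lfloor>K\<rfloor>}"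
  proof
    fix g assume "g \<in> {g. real (word_length Z g) \<le> K}"
    hence K: "real (word_length Z g) \<le> K" by simp
    have "\<exists>n ws. ws \<in> lists Z \<and> length ws = n \<and> sum_list ws = g" using assms(2) by blast
    hence "\<exists>ws. ws \<in> lists Z \<and> length ws = word_length Z g \<and> sum_list ws = g"
      unfolding word_length_def by (rule LeastI_ex)
    then obtain ws where ws: "ws \<in> lists Z" "length ws = word_length Z g" "sum_list ws = g" by blast
    have "length ws \<le> nat \<lfloor>K\<rfloor>" using K ws(2) by linarith
    then show "g \<in> sum_list ` {ws. set ws \<subseteq> Z \<and> length ws \<le> nat \<lfloor>K\<rfloor>}" using ws by auto
  qed
  then show ?thesis using finite_lists_length_le[OF assms(1)] finite_subset by blast
qed

lemma C_reg:
  assumes fin: "finite Z" and gen: "\<forall>g. \<exists>ws. ws \<in> lists Z \<and> sum_list ws = g"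
  shows "reg B {w \<in> lists B. sync_BCD_pair Z \<iota>X \<iota>Y K (map fst w) (map snd w)}"
proof -
  define hsf where "hsf = hs \<iota>X \<iota>Y"
  define Bl where "Bl = {g. real (word_length Z g) \<le> K}"
  define C where "C = {w \<in> lists B. sync_BCD_pair Z \<iota>X \<iota>Y K (map fst w) (map snd w)}"
  define P where "P u = {(g, foldl hsf g u) | g. g \<in> Bl \<and> (\<forall>j. foldl hsf g (take j u) \<in> Bl)}" for u
  define \<Phi> where "\<Phi> PP = {v \<in> lists B. \<exists>(g,h)\<in>PP. foldl hsf h v = g \<and> (\<forall>j. foldl hsf h (take j v) \<in> Bl)}" for PP
  have Cc: "w \<in> C \<longleftrightarrow> w \<in> lists B \<and> (\<exists>g. g \<in> Bl \<and> foldl hsf g w = g \<and> (\<forall>j. foldl hsf g (take j w) \<in> Bl))" for w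
    by (simp add: C_def sync_iff Bl_def hsf_def)
  have split: "(\<forall>j. foldl hsf g (take j (u@v)) \<in> Bl) \<longleftrightarrow> (\<forall>j. foldl hsf g (take j u) \<in> Bl) \<and> (\<forall>j. foldl hsf (foldl hsf g u) (take j v) \<in> Bl)" for g u v
    using all_take_append[of "\<lambda>x. foldl hsf g x \<in> Bl" u v] by simp
  have q: "quot u C = \<Phi> (P u)" if "u \<in> lists B" for u
  proof (intro set_eqI)
    fix v
    show "v \<in> quot u C \<longleftrightarrow> v \<in> \<Phi> (P u)"
      unfolding quot_def Cc \<Phi>_def P_def using that split by auto
  qed
  have Psub: "P u \<subseteq> Bl \<times> Bl" for u
  proof
    fix x assume "x \<in> P u"
    then obtain g where "x = (g, foldl hsf g u)" "g \<in> Bl" "\<forall>j. foldl hsf g (take j u) \<in> Bl"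
      unfolding P_def by blast
    then show "x \<in> Bl \<times> Bl" by (metis SigmaI take_all_iff order_refl)
  qed
  have "{quot u C | u. u \<in> lists B} \<subseteq> \<Phi> ` Pow (Bl \<times> Bl)"
    using q Psub by blast
  moreover have "finite Bl" using ball_finite[OF fin gen] by (simp add: Bl_def)
  ultimately have "finite {quot u C | u. u \<in> lists B}"
    by (meson finite_Pow_iff finite_SigmaI finite_imageI finite_subset)
  then show ?thesis unfolding reg_def C_def by blast
qed


lemma map_pair_zip: "map (\<lambda>x. (f x, g x)) xs = zip (map f xs) (map g xs)"
  by (induction xs) auto

lemma zip_sub: "set xs \<subseteq> A \<Longrightarrow> set ys \<subseteq> B \<Longrightarrow> set (zip xs ys) \<subseteq> A \<times> B"
  by (auto dest: set_zip_leftD set_zip_rightD)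

lemma decomp: "map fst u = map snd u \<or> (\<exists>p a b q. u = p @ (a,b) # q \<and> map fst p = map snd p \<and> a \<noteq> b)"
proof (induction u)
  case Nil then show ?case by simp
next
  case (Cons x u)
  obtain a b where x: "x = (a,b)" by fastforce
  show ?case
  proof (cases "a = b")
    case False
    have "x # u = [] @ (a,b) # u \<and> map fst [] = map snd [] \<and> a \<noteq> b" using x False by simp
    then show ?thesis by blast
  next
    case True
    from Cons.IH show ?thesis
    proof
      assume "map fst u = map snd u" then show ?thesis using x True by simp
    next
      assume "\<exists>p a b q. u = p @ (a,b) # q \<and> map fst p = map snd p \<and> a \<noteq> b"
      then obtain p a' b' q where "u = p @ (a',b') # q" "map fst p = map snd p" "a' \<noteq> b'" by blast
      then have "x # u = (x # p) @ (a',b') # q \<and> map fst (x#p) = map snd (x#p) \<and> a' \<noteq> b'"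
        using x True by simp
      then show ?thesis by blast
    qed
  qed
qed

lemma lex_le_pref: "lex_le r (U @ V1) (U @ V2) \<longleftrightarrow> lex_le r V1 V2"
  by (simp add: lex_le_def lexord_same_pref_iff)

lemma lex_le_diff: "a \<noteq> b \<Longrightarrow> lex_le r (U @ a # V1) (U @ b # V2) \<longleftrightarrow> (a,b) \<in> r"
  by (simp add: lex_le_pref) (simp add: lex_le_def)

lemma Lx_reg: "reg (A \<times> A) {w \<in> lists (A \<times> A). \<not> lex_le r (map fst w) (map snd w)}"
proof -
  define Lx where "Lx = {w \<in> lists (A \<times> A). \<not> lex_le r (map fst w) (map snd w)}"
  have "quot u Lx \<in> {Lx, {}, lists (A \<times> A)}" if u: "u \<in> lists (A \<times> A)" for u
    using decomp[of u]
  proof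
    assume e: "map fst u = map snd u"
    have "quot u Lx = Lx"
    proof (intro set_eqI)
      fix v
      have "lex_le r (map fst (u @ v)) (map snd (u @ v)) \<longleftrightarrow> lex_le r (map fst v) (map snd v)"
        by (simp only: map_append e lex_le_pref)
      then show "v \<in> quot u Lx \<longleftrightarrow> v \<in> Lx" using u by (simp add: quot_def Lx_def)
    qed
    then show ?thesis by simp
  next
    assume "\<exists>p a b q. u = p @ (a,b) # q \<and> map fst p = map snd p \<and> a \<noteq> b"
    then obtain p a b q where d: "u = p @ (a,b) # q" "map fst p = map snd p" "a \<noteq> b" by blast
    have k: "lex_le r (map fst (u @ v)) (map snd (u @ v)) \<longleftrightarrow> (a,b) \<in> r" for v
    proof -
      have "map fst (u @ v) = map fst p @ a # (map fst q @ map fst v)"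
           "map snd (u @ v) = map fst p @ b # (map snd q @ map snd v)"
        using d by simp_all
      then show ?thesis using lex_le_diff[OF d(3)] by simp
    qed
    have "quot u Lx = (if (a,b) \<in> r then {} else lists (A \<times> A))"
      using u k by (auto simp: quot_def Lx_def)
    then show ?thesis by simp
  qed
  then have "{quot u Lx | u. u \<in> lists (A \<times> A)} \<subseteq> {Lx, {}, lists (A \<times> A)}" by blast
  then have "finite {quot u Lx | u. u \<in> lists (A \<times> A)}" using finite_subset by blast
  then show ?thesis unfolding reg_def Lx_def by blast
qed

theorem lemma5p13:
  fixes Z :: "'g::group_add set"
    and X :: "'x set" and Y :: "'y set"
    and \<iota>X :: "'x \<Rightarrow> 'g" and \<iota>Y :: "'y \<Rightarrow> 'g"
    and K :: real
    and r :: "('y option \<times> 'y option) set"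
    and S :: "'y option list set"
  assumes "finite_symmetric_generating Z"
    and "finite X" and "finite Y"
    and "K \<ge> 0"
    and "linear_order_on (padded Y) r"
    and "S \<subseteq> lists (padded Y)"
    and "regular (padded Y) S"
  shows "regular (padded X \<times> padded Y)
     {w \<in> lists (padded X \<times> padded Y).
        map snd w \<in> S \<and> sync_BCD_pair Z \<iota>X \<iota>Y K (map fst w) (map snd w) \<and>
        (\<forall>V'\<in>S. sync_BCD_pair Z \<iota>X \<iota>Y K (map fst w) V' \<longrightarrow> lex_le r (map snd w) V')}"
proof -
  define PX where "PX = padded X"
  define PY where "PY = padded Y"
  define B where "B = PX \<times> PY"
  define B3 where "B3 = PX \<times> PY \<times> PY"
  define sy where "sy U V = sync_BCD_pair Z \<iota>X \<iota>Y K U V" for U V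
  have fin: "finite Z" and gen: "\<forall>g. \<exists>ws. ws \<in> lists Z \<and> sum_list ws = g"
    using assms(1) unfolding finite_symmetric_generating_def by auto
  have SR: "reg PY S" using assms(7) regular_iff_reg PY_def by blast
  define C where "C = {w \<in> lists B. sy (map fst w) (map snd w)}"
  have CR: "reg B C" unfolding C_def sy_def using C_reg[OF fin gen] by blast
  define A0 where "A0 = {w \<in> lists B. map snd w \<in> S}"
  have A0R: "reg B A0" unfolding A0_def by (rule reg_inv[OF _ SR]) (auto simp: B_def)
  define Lx where "Lx = {w \<in> lists (PY \<times> PY). \<not> lex_le r (map fst w) (map snd w)}"
  have LxR: "reg (PY \<times> PY) Lx" unfolding Lx_def by (rule Lx_reg)
  define T1 where "T1 = {t \<in> lists B3. map (\<lambda>t. snd (snd t)) t \<in> S}"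
  define T2 where "T2 = {t \<in> lists B3. map (\<lambda>t. (fst t, snd (snd t))) t \<in> C}"
  define T3 where "T3 = {t \<in> lists B3. map snd t \<in> Lx}"
  have T1R: "reg B3 T1" unfolding T1_def by (rule reg_inv[OF _ SR]) (auto simp: B3_def)
  have T2R: "reg B3 T2" unfolding T2_def by (rule reg_inv[OF _ CR]) (auto simp: B3_def B_def)
  have T3R: "reg B3 T3" unfolding T3_def by (rule reg_inv[OF _ LxR]) (auto simp: B3_def)
  define D where "D = map (\<lambda>t. (fst t, fst (snd t))) ` (T1 \<inter> T2 \<inter> T3)"
  have DR: "reg B D" unfolding D_def
    by (rule reg_img[OF _ reg_Int[OF reg_Int[OF T1R T2R] T3R]]) (auto simp: B3_def B_def)
  have FR: "reg B ((A0 \<inter> C) - D)" using reg_Diff[OF reg_Int[OF A0R CR] DR] .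
  have Dc: "w \<in> D \<longleftrightarrow> w \<in> lists B \<and> (\<exists>V'\<in>S. sy (map fst w) V' \<and> \<not> lex_le r (map snd w) V')" for w
  proof
    assume "w \<in> D"
    then obtain t where t: "t \<in> T1" "t \<in> T2" "t \<in> T3" "w = map (\<lambda>t. (fst t, fst (snd t))) t"
      unfolding D_def by blast
    have "w \<in> lists B" using t(1,4) by (force simp: T1_def B3_def B_def)
    moreover have "map (\<lambda>t. snd (snd t)) t \<in> S" using t(1) by (simp add: T1_def)
    moreover have "sy (map fst w) (map (\<lambda>t. snd (snd t)) t)"
      using t(2,4) by (simp add: T2_def C_def comp_def)
    moreover have "\<not> lex_le r (map snd w) (map (\<lambda>t. snd (snd t)) t)"
      using t(3,4) by (simp add: T3_def Lx_def comp_def)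
    ultimately show "w \<in> lists B \<and> (\<exists>V'\<in>S. sy (map fst w) V' \<and> \<not> lex_le r (map snd w) V')"
      by blast
  next
    assume "w \<in> lists B \<and> (\<exists>V'\<in>S. sy (map fst w) V' \<and> \<not> lex_le r (map snd w) V')"
    then obtain V' where w: "w \<in> lists B" "V' \<in> S" "sy (map fst w) V'" "\<not> lex_le r (map snd w) V'"
      by blast
    have len: "length V' = length w" using w(3) by (simp add: sy_def sync_BCD_pair_def)
    have V'l: "V' \<in> lists PY" using w(2) assms(6) PY_def by blast
    define t where "t = zip (map fst w) (zip (map snd w) V')"
    have m1: "map fst t = map fst w" using len by (simp add: t_def)
    have ms: "map snd t = zip (map snd w) V'" using len by (simp add: t_def)
    have "map (\<lambda>t. fst (snd t)) t = map fst (map snd t)" by simp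
    then have m2: "map (\<lambda>t. fst (snd t)) t = map snd w" using len ms by simp
    have "map (\<lambda>t. snd (snd t)) t = map snd (map snd t)" by simp
    then have m3: "map (\<lambda>t. snd (snd t)) t = V'" using len ms by simp
    have m4: "map (\<lambda>t. (fst t, fst (snd t))) t = w"
      unfolding map_pair_zip m1 m2 by (rule zip_map_fst_snd)
    have sw1: "set (map fst w) \<subseteq> PX" "set (map snd w) \<subseteq> PY"
      using w(1) by (auto simp: B_def)
    have sV: "set V' \<subseteq> PY" using V'l by auto
    have tl: "t \<in> lists B3"
      using zip_sub[OF sw1(1) zip_sub[OF sw1(2) sV]] unfolding t_def B3_def by auto
    have mz: "map (\<lambda>t. (fst t, snd (snd t))) t = zip (map fst w) V'"
      unfolding map_pair_zip m1 m3 ..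
    have "zip (map fst w) V' \<in> lists B"
      using zip_sub[OF sw1(1) sV] by (auto simp: B_def)
    moreover have "sy (map fst (zip (map fst w) V')) (map snd (zip (map fst w) V'))"
      using w(3) len by simp
    ultimately have "zip (map fst w) V' \<in> C" unfolding C_def by blast
    then have "map (\<lambda>t. (fst t, snd (snd t))) t \<in> C" by (simp only: mz)
    then have "t \<in> T2" using tl unfolding T2_def by blast
    moreover have "t \<in> T1" using tl m3 w(2) by (simp add: T1_def)
    moreover have "map snd t \<in> Lx"
    proof -
      have "map snd t = zip (map snd w) V'" using len by (simp add: t_def)
      moreover have "zip (map snd w) V' \<in> lists (PY \<times> PY)"
        using zip_sub[OF sw1(2) sV] by auto
      ultimately show ?thesis using w(4) len by (simp add: Lx_def)
    qed
    then have "t \<in> T3" using tl by (simp add: T3_def)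
    ultimately show "w \<in> D" unfolding D_def using m4 by blast
  qed
  have eq: "{w \<in> lists (padded X \<times> padded Y).
        map snd w \<in> S \<and> sync_BCD_pair Z \<iota>X \<iota>Y K (map fst w) (map snd w) \<and>
        (\<forall>V'\<in>S. sync_BCD_pair Z \<iota>X \<iota>Y K (map fst w) V' \<longrightarrow> lex_le r (map snd w) V')}
     = (A0 \<inter> C) - D"
    using Dc unfolding A0_def C_def B_def PX_def PY_def sy_def by blast
  show ?thesis unfolding eq regular_iff_reg using FR B_def PX_def PY_def by simp
qed

end
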